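(* A norm $\|\cdot\|$ on $\mathbb{M}_n$ is an $M$-norm if and only if its dual norm $\|\cdot\|_*$ is an $L$-norm; and $\|\cdot\|$ is an $L$-norm if and only if $\|\cdot\|_*$ is an $M$-norm.
   Context: $\mathbb{M}_n$ is the algebra of complex $n\times n$ matrices with identity $I$. The dual norm is $\|Y\|_*=\sup\{|\mathrm{Tr}(Y^*X)| : X\in\mathbb{M}_n,\ \|X\|\le 1\}$. A norm $\|\cdot\|$ on $\mathbb{M}_n$ is an $M$-norm if $\left\|\sum_{i=1}^k C_i^*X_iC_i\right\|\le \max_{1\le i\le k}\|X_i\|$ for all $k$, all $X_i\in\mathbb{M}_n$ and all $C_i\in\mathbb{M}_n$ with $\sum_{i=1}^k C_i^*C_i=I$. It is an $L$-norm if $\sum_{i=1}^k\|C_iXC_i^*\|\le\|X\|$ for all $k$, all $X\in\mathbb{M}_n$ and all $C_i$ with $\sum_{i=1}^k C_i^*C_i=I$. *)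

theory Defs
  imports "HOL-Analysis.Analysis"
begin

type_synonym 'n cmat = "complex ^'n ^'n"

definition cadj :: "'n::finite cmat \<Rightarrow> 'n cmat" where
  "cadj A = (\<chi> i j. cnj (A $ j $ i))"

definition ctrace :: "'n::finite cmat \<Rightarrow> complex" where
  "ctrace A = (\<Sum>i\<in>UNIV. A $ i $ i)"

definition is_mat_norm :: "('n::finite cmat \<Rightarrow> real) \<Rightarrow> bool" where
  "is_mat_norm N \<longleftrightarrow>
     (\<forall>X. N X \<ge> 0) \<and> (\<forall>X. N X = 0 \<longleftrightarrow> X = 0) \<and>
     (\<forall>c X. N (\<chi> i j. c * X $ i $ j) = cmod c * N X) \<and>
     (\<forall>X Y. N (X + Y) \<le> N X + N Y)"

definition dual_norm :: "('n::finite cmat \<Rightarrow> real) \<Rightarrow> 'n cmat \<Rightarrow> real" where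
  "dual_norm N Y = (SUP X\<in>{X. N X \<le> 1}. cmod (ctrace (cadj Y ** X)))"

definition M_norm :: "('n::finite cmat \<Rightarrow> real) \<Rightarrow> bool" where
  "M_norm N \<longleftrightarrow>
     (\<forall>(k::nat) (X::nat \<Rightarrow> 'n cmat) (C::nat \<Rightarrow> 'n cmat).
        (\<Sum>i<k. cadj (C i) ** C i) = mat 1 \<longrightarrow>
        N (\<Sum>i<k. cadj (C i) ** X i ** C i) \<le> (MAX i\<in>{..<k}. N (X i)))"

definition L_norm :: "('n::finite cmat \<Rightarrow> real) \<Rightarrow> bool" where
  "L_norm N \<longleftrightarrow>
     (\<forall>(k::nat) (X::'n cmat) (C::nat \<Rightarrow> 'n cmat).
        (\<Sum>i<k. cadj (C i) ** C i) = mat 1 \<longrightarrow>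
        (\<Sum>i<k. N (C i ** X ** cadj (C i))) \<le> N X)"

end

theory Submission imports Defs begin

definition smul :: "complex \<Rightarrow> 'n::finite cmat \<Rightarrow> 'n cmat" where
  "smul c X = (\<chi> i j. c * X $ i $ j)"
definition ip :: "'n::finite cmat \<Rightarrow> 'n cmat \<Rightarrow> complex" where
  "ip Y X = ctrace (cadj Y ** X)"

lemma cadj_mult: "cadj (A ** B) = cadj B ** cadj (A::'n::finite cmat)"
  by (simp add: cadj_def matrix_matrix_mult_def vec_eq_iff mult.commute)
lemma cadj_cadj[simp]: "cadj (cadj (A::'n::finite cmat)) = A"
  by (simp add: cadj_def vec_eq_iff)
lemma ctrace_comm: "ctrace (A ** B) = ctrace (B ** (A::'n::finite cmat))"
  unfolding ctrace_def matrix_matrix_mult_def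
  by (simp, subst sum.swap, simp add: mult.commute)
lemma ip_cyc: "ip (C ** Y ** cadj C) X = ip Y (cadj C ** X ** C)"
proof -
  have "ip (C ** Y ** cadj C) X = ctrace (C ** (cadj Y ** cadj C ** X))"
    by (simp add: ip_def cadj_mult matrix_mul_assoc)
  also have "\<dots> = ctrace (cadj Y ** cadj C ** X ** C)"
    by (subst ctrace_comm) (simp add: matrix_mul_assoc)
  also have "\<dots> = ip Y (cadj C ** X ** C)" by (simp add: ip_def matrix_mul_assoc)
  finally show ?thesis .
qed
lemma ip_expand: "ip Y X = (\<Sum>i\<in>UNIV. \<Sum>j\<in>UNIV. cnj (Y$j$i) * X$j$i)"
  by (simp add: ip_def ctrace_def cadj_def matrix_matrix_mult_def)
lemma ip_zero[simp]: "ip Y 0 = 0" "ip 0 X = 0"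
  by (simp_all add: ip_expand)
lemma ip_add_right: "ip Y (X + Z) = ip Y X + ip Y Z"
  by (simp add: ip_expand algebra_simps sum.distrib)
lemma ip_add_left: "ip (Y + Z) X = ip Y X + ip Z X"
  by (simp add: ip_expand algebra_simps sum.distrib)
lemma ip_sum_right: "ip Y (\<Sum>i\<in>I. f i) = (\<Sum>i\<in>I. ip Y (f i))"
  by (induction I rule: infinite_finite_induct) (simp_all add: ip_add_right)
lemma ip_sum_left: "ip (\<Sum>i\<in>I. f i) X = (\<Sum>i\<in>I. ip (f i) X)"
  by (induction I rule: infinite_finite_induct) (simp_all add: ip_add_left)
lemma ip_smul_right: "ip Y (smul c X) = c * ip Y X"
  by (simp add: ip_expand smul_def sum_distrib_left mult.left_commute)
lemma ip_smul_left: "ip (smul c Y) X = cnj c * ip Y X"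
  by (simp add: ip_expand smul_def sum_distrib_left mult.assoc)
lemma ip_Re: "Re (ip Y X) = inner Y X"
  unfolding ip_expand by (subst sum.swap) (simp add: inner_vec_def inner_complex_def)
lemma smul_real: "smul (of_real r) X = r *\<^sub>R X"
  by (simp only: smul_def vec_eq_iff vec_lambda_beta vector_scaleR_component) (simp add: scaleR_conv_of_real)
lemma ip_bound: "cmod (ip Y X) \<le> real (CARD('n)) ^ 2 * norm Y * norm (X::'n::finite cmat)"
proof -
  have "cmod (ip Y X) \<le> (\<Sum>i\<in>UNIV. \<Sum>j\<in>UNIV. cmod (cnj (Y$j$i) * X$j$i))"
    unfolding ip_expand by (rule order.trans[OF norm_sum sum_mono]) (rule norm_sum)
  also have "\<dots> \<le> (\<Sum>i\<in>(UNIV::'n set). \<Sum>j\<in>(UNIV::'n set). norm Y * norm X)"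
    apply (intro sum_mono)
    apply (simp add: norm_mult)
  proof -
    fix i j
    have "cmod (Y$j$i) \<le> norm Y" using Finite_Cartesian_Product.norm_nth_le[of "Y$j" i] Finite_Cartesian_Product.norm_nth_le[of Y j] by linarith
    moreover have "cmod (X$j$i) \<le> norm X" using Finite_Cartesian_Product.norm_nth_le[of "X$j" i] Finite_Cartesian_Product.norm_nth_le[of X j] by linarith
    ultimately show "cmod (Y$j$i) * cmod (X$j$i) \<le> norm Y * norm X" by (simp add: mult_mono)
  qed

  finally show ?thesis by (simp add: power2_eq_square)
qed
lemma rot: "\<exists>u. cmod u = 1 \<and> u * z = complex_of_real (cmod z)"
proof (cases "z = 0")
  case True then show ?thesis by (intro exI[of _ 1]) auto
next
  case False
  have "cnj z * z = of_real (cmod z) ^ 2" by (metis complex_norm_square mult.commute of_real_power)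
  with False show ?thesis
    by (intro exI[of _ "cnj z / complex_of_real (cmod z)"])
       (simp add: norm_divide complex_norm_square[symmetric] power2_eq_square)
qed

locale mnorm =
  fixes N :: "'n::finite cmat \<Rightarrow> real"
  assumes nm: "is_mat_norm N"
begin

lemma N_nonneg: "N X \<ge> 0" using nm by (simp add: is_mat_norm_def)
lemma N_eq0: "N X = 0 \<longleftrightarrow> X = 0" using nm by (simp add: is_mat_norm_def)
lemma N_smul: "N (smul c X) = cmod c * N X" using nm by (simp add: is_mat_norm_def smul_def)
lemma N0[simp]: "N 0 = 0" by (simp add: N_eq0)
lemma N_tri: "N (X + Y) \<le> N X + N Y" using nm by (simp add: is_mat_norm_def)
lemma N_scaleR: "N (r *\<^sub>R X) = \<bar>r\<bar> * N X"
  using N_smul[of "of_real r" X] by (simp add: smul_real)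
lemma N_sum: "N (\<Sum>i\<in>I. f i) \<le> (\<Sum>i\<in>I. N (f i))"
proof (induction I rule: infinite_finite_induct)
  case (infinite A) then show ?case using N_eq0 by simp
next
  case empty then show ?case using N_eq0 by simp
next
  case (insert x F) then show ?case using N_tri[of "f x" "sum f F"] by simp
qed

lemma N_convex: "convex_on UNIV N"
  unfolding convex_on_def
proof (intro conjI ballI allI impI)
  fix x y :: "'n cmat" and u v :: real
  assume "u \<ge> 0" "v \<ge> 0" "u + v = 1"
  then show "N (u *\<^sub>R x + v *\<^sub>R y) \<le> u * N x + v * N y"
    using N_tri[of "u *\<^sub>R x" "v *\<^sub>R y"] by (simp add: N_scaleR)
qed simp

lemma N_cont: "continuous_on UNIV N"
  by (rule convex_on_continuous[OF open_UNIV N_convex])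

lemma N_lower: "\<exists>c>0. \<forall>X. c * norm X \<le> N X"
proof -
  obtain a :: "'n cmat" where a: "norm a = 1" using vector_choose_size[of 1] by auto
  have "compact (sphere (0::'n cmat) 1)" by simp
  moreover have "sphere (0::'n cmat) 1 \<noteq> {}" using a by auto
  ultimately obtain X0 where X0: "X0 \<in> sphere 0 1" "\<And>Y. Y \<in> sphere 0 1 \<Longrightarrow> N X0 \<le> N Y"
    using continuous_attains_inf[of "sphere 0 1" N] continuous_on_subset[OF N_cont] by blast
  have "X0 \<noteq> 0" using X0 by auto
  then have pos: "N X0 > 0" using N_eq0 N_nonneg by (metis order_less_le)
  have "N X0 * norm X \<le> N X" for X
  proof (cases "X = 0")
    case True then show ?thesis by (simp add: N_nonneg)
  next
    case False
    then have "N X0 \<le> N ((1 / norm X) *\<^sub>R X)" by (intro X0(2)) simp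
    then show ?thesis using False by (simp add: N_scaleR field_simps)
  qed
  then show ?thesis using pos by blast
qed

definition "D = dual_norm N"

lemma bdd: "bdd_above ((\<lambda>X. cmod (ip Y X)) ` {X. N X \<le> 1})"
proof -
  obtain c where c: "c > 0" "\<And>X. c * norm X \<le> N X" using N_lower by blast
  have "cmod (ip Y X) \<le> real (CARD('n)) ^ 2 * norm Y * (1 / c)" if "N X \<le> 1" for X
  proof -
    have "norm X \<le> 1 / c" using c(2)[of X] that c(1) by (simp add: field_simps)
    then show ?thesis using ip_bound[of Y X]
      by (meson mult_left_mono order.trans mult_nonneg_nonneg norm_ge_zero zero_le_power of_nat_0_le_iff)
  qed
  then show ?thesis by (intro bdd_aboveI) auto
qed

lemma D_def': "D Y = (SUP X\<in>{X. N X \<le> 1}. cmod (ip Y X))"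
  by (simp add: D_def dual_norm_def ip_def)

lemma ne: "{X. N X \<le> 1} \<noteq> {}" using N0 by (metis empty_iff mem_Collect_eq zero_less_one_class.zero_le_one)

lemma D_upper: "N X \<le> 1 \<Longrightarrow> cmod (ip Y X) \<le> D Y"
  unfolding D_def' by (rule cSUP_upper[OF _ bdd]) simp

lemma D_least: "(\<And>X. N X \<le> 1 \<Longrightarrow> cmod (ip Y X) \<le> m) \<Longrightarrow> D Y \<le> m"
  unfolding D_def' by (rule cSUP_least[OF ne]) auto

lemma D_nonneg: "D Y \<ge> 0"
  using D_upper[of 0 Y] N_eq0[of 0] by simp

lemma F1: "cmod (ip Y X) \<le> D Y * N X"
proof (cases "X = 0")
  case True then show ?thesis using D_nonneg N_nonneg by simp
next
  case False
  then have p: "N X > 0" using N_eq0 N_nonneg by (metis order_less_le)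
  have "cmod (ip Y (smul (of_real (1 / N X)) X)) \<le> D Y"
    by (rule D_upper) (use p in \<open>simp add: N_smul norm_divide\<close>)
  then show ?thesis using p by (simp add: ip_smul_right norm_mult norm_divide field_simps)
qed

lemma near_D: "e > 0 \<Longrightarrow> \<exists>X. N X \<le> 1 \<and> Re (ip Y X) > D Y - e"
proof -
  assume e: "e > 0"
  have "D Y - e < D Y" using e by simp
  then obtain X where X: "N X \<le> 1" "D Y - e < cmod (ip Y X)"
    unfolding D_def' less_cSUP_iff[OF ne bdd] by auto
  obtain u where u: "cmod u = 1" "u * ip Y X = of_real (cmod (ip Y X))" using rot by blast
  have "N (smul u X) \<le> 1" using X u by (simp add: N_smul)
  moreover have "Re (ip Y (smul u X)) = cmod (ip Y X)" using u by (simp add: ip_smul_right)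
  ultimately show ?thesis using X by auto
qed

lemma D_zero: "D 0 = 0"
  using D_least[of 0 0] D_nonneg[of 0] by simp

lemma bidual: assumes "\<And>Y. D Y \<le> 1 \<Longrightarrow> cmod (ip Y X) \<le> m" shows "N X \<le> m"
proof (rule ccontr)
  assume "\<not> N X \<le> m"
  then have m: "m < N X" by simp
  have m0: "m \<ge> 0" using assms[of 0] D_zero by simp
  define r where "r = (m + N X) / 2"
  have r: "r > 0" "m < r" "r < N X" using m m0 by (auto simp: r_def)
  define S where "S = {x. N x \<le> r}"
  have cS: "convex S" unfolding S_def convex_def
  proof (intro allI impI ballI, clarsimp)
    fix x y :: "'n cmat" and u v :: real
    assume h: "N x \<le> r" "N y \<le> r" "u \<ge> 0" "v \<ge> 0" "u + v = 1"
    have "u * N x \<le> u * r" using h by (intro mult_left_mono) auto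
    moreover have "v * N y \<le> v * r" using h by (intro mult_left_mono) auto
    moreover have "u * r + v * r = r" using h(5) by (metis distrib_right mult_1)
    ultimately show "N (u *\<^sub>R x + v *\<^sub>R y) \<le> r"
      using N_tri[of "u *\<^sub>R x" "v *\<^sub>R y"] h by (simp add: N_scaleR)
  qed
  have clS: "closed S" unfolding S_def by (rule closed_Collect_le[OF N_cont continuous_on_const])
  have "X \<notin> S" using r by (simp add: S_def)
  then obtain a b where ab: "inner a X < b" "\<And>x. x \<in> S \<Longrightarrow> inner a x > b"
    using separating_hyperplane_closed_point[OF cS clS] by blast
  have b: "b < 0" using ab(2)[of 0] r N_eq0[of 0] by (simp add: S_def)
  define Y where "Y = (r / (- b)) *\<^sub>R (- a)"
  have "D Y \<le> 1"
  proof (rule D_least)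
    fix x assume x: "N x \<le> 1"
    obtain u where u: "cmod u = 1" "u * ip Y x = of_real (cmod (ip Y x))" using rot by blast
    have "r *\<^sub>R smul u x \<in> S" using x u r by (simp add: S_def N_scaleR N_smul)
    then have "inner a (r *\<^sub>R smul u x) > b" by (rule ab(2))
    moreover have "cmod (ip Y x) = Re (ip Y (smul u x))" using u by (simp add: ip_smul_right)
    moreover have "Re (ip Y (smul u x)) = (1 / (- b)) * (- inner a (r *\<^sub>R smul u x))"
      unfolding ip_Re Y_def by simp
    ultimately have "b * cmod (ip Y x) = - inner a (r *\<^sub>R smul u x) * (-1)"
      "inner a (r *\<^sub>R smul u x) > b" using b by (auto simp: field_simps)
    then have "b * 1 < b * cmod (ip Y x)" by simp
    then show "cmod (ip Y x) \<le> 1" using b mult_less_cancel_left_neg[of b] by auto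
  qed
  moreover have "cmod (ip Y X) > m"
  proof -
    have "Re (ip Y X) = (r / (- b)) * (- inner a X)" unfolding ip_Re Y_def by simp
    also have "\<dots> > r"
    proof -
      have "- inner a X > - b" using ab(1) by simp
      then have "(r / (- b)) * (- inner a X) > (r / (- b)) * (- b)"
      proof -
        have "r / (- b) > 0" using r b by (intro divide_pos_pos) auto
        then show ?thesis using \<open>- inner a X > - b\<close> by (rule mult_strict_left_mono[rotated])
      qed
      then show ?thesis using b by simp
    qed
    finally show ?thesis using r complex_Re_le_cmod[of "ip Y X"] by linarith
  qed
  ultimately show False using assms[of Y] by linarith
qed

lemma near_N: "e > 0 \<Longrightarrow> \<exists>Y. D Y \<le> 1 \<and> Re (ip Y X) > N X - e"
proof (rule ccontr)
  assume e: "e > 0" and no: "\<not> (\<exists>Y. D Y \<le> 1 \<and> Re (ip Y X) > N X - e)"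
  have "cmod (ip Y X) \<le> N X - e" if "D Y \<le> 1" for Y
  proof -
    obtain u where u: "cmod u = 1" "u * ip Y X = of_real (cmod (ip Y X))" using rot by blast
    have "D (smul (cnj u) Y) \<le> 1"
    proof (rule D_least)
      fix x assume "N x \<le> 1"
      then show "cmod (ip (smul (cnj u) Y) x) \<le> 1"
        using F1[of Y x] that u D_nonneg[of Y] N_nonneg[of x] mult_le_one[of "D Y" "N x"]
        by (simp add: ip_smul_left norm_mult)
    qed
    moreover have "Re (ip (smul (cnj u) Y) X) = cmod (ip Y X)" using u by (simp add: ip_smul_left)
    ultimately show ?thesis using no by fastforce
  qed
  then have "N X \<le> N X - e" by (rule bidual)
  then show False using e by simp
qed

end

lemma k_pos: "(\<Sum>i<(k::nat). f i) = (mat 1 :: 'n::finite cmat) \<Longrightarrow> k > 0"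
proof (rule ccontr)
  assume "(\<Sum>i<k. f i) = (mat 1 :: 'n::finite cmat)" "\<not> k > 0"
  then have "k = 0" by simp
  then have "(mat 1 :: 'n cmat) = 0" using \<open>(\<Sum>i<k. f i) = mat 1\<close> by simp
  then have "(mat 1 :: 'n cmat) $ undefined $ undefined = 0" by simp
  then show False by (simp add: mat_def)
qed

lemma max_ge: "i < (k::nat) \<Longrightarrow> f i \<le> (MAX i\<in>{..<k}. f i :: real)"
  by (rule Max_ge) auto
lemma max_le: "(k::nat) > 0 \<Longrightarrow> (\<And>i. i < k \<Longrightarrow> f i \<le> m) \<Longrightarrow> (MAX i\<in>{..<k}. f i :: real) \<le> m"
  by (subst Max_le_iff) auto

lemma sum_cyc1: "(\<Sum>i<k. ip (C i ** Y ** cadj (C i)) (X i)) = ip Y (\<Sum>i<k. cadj (C i) ** X i ** C i)"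
  by (simp add: ip_sum_right ip_cyc)
lemma sum_cyc2: "(\<Sum>i<k. ip (Y i) (C i ** X ** cadj (C i))) = ip (\<Sum>i<k. cadj (C i) ** Y i ** C i) X"
  using ip_cyc[of "cadj (C _)"] by (simp add: ip_sum_left)

lemma eps_le: assumes "\<And>e. e > 0 \<Longrightarrow> (x::real) \<le> y + e" shows "x \<le> y"
  using assms field_le_epsilon by blast

context mnorm begin

lemma dirA: assumes "M_norm N" shows "L_norm D"
  unfolding L_norm_def
proof (intro allI impI)
  fix k :: nat and Y :: "'n cmat" and C :: "nat \<Rightarrow> 'n cmat"
  assume hC: "(\<Sum>i<k. cadj (C i) ** C i) = mat 1"
  have k: "k > 0" by (rule k_pos[OF hC])
  show "(\<Sum>i<k. D (C i ** Y ** cadj (C i))) \<le> D Y"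
  proof (rule eps_le)
    fix e :: real assume e: "e > 0"
    have "\<forall>i. \<exists>X. N X \<le> 1 \<and> Re (ip (C i ** Y ** cadj (C i)) X) > D (C i ** Y ** cadj (C i)) - e / k"
      using near_D e k by simp
    then obtain X where X: "\<And>i. N (X i) \<le> 1"
      "\<And>i. Re (ip (C i ** Y ** cadj (C i)) (X i)) > D (C i ** Y ** cadj (C i)) - e / k"
      by metis
    have "(\<Sum>i<k. D (C i ** Y ** cadj (C i))) \<le> (\<Sum>i<k. Re (ip (C i ** Y ** cadj (C i)) (X i)) + e / k)"
    proof (rule sum_mono)
      fix i show "D (C i ** Y ** cadj (C i)) \<le> Re (ip (C i ** Y ** cadj (C i)) (X i)) + e / k"
        using X(2)[of i] by linarith
    qed
    also have "\<dots> = Re (ip Y (\<Sum>i<k. cadj (C i) ** X i ** C i)) + e"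
      using k by (simp add: sum.distrib sum_cyc1[symmetric] Re_sum)
    also have "\<dots> \<le> D Y * N (\<Sum>i<k. cadj (C i) ** X i ** C i) + e"
      using F1[of Y "\<Sum>i<k. cadj (C i) ** X i ** C i"] complex_Re_le_cmod[of "ip Y (\<Sum>i<k. cadj (C i) ** X i ** C i)"] by linarith
    also have "\<dots> \<le> D Y + e"
    proof -
      have "N (\<Sum>i<k. cadj (C i) ** X i ** C i) \<le> (MAX i\<in>{..<k}. N (X i))"
        using assms hC unfolding M_norm_def by blast
      also have "\<dots> \<le> 1" using k X(1) by (intro max_le) auto
      finally show ?thesis using D_nonneg[of Y] mult_left_le[of _ "D Y"] N_nonneg by simp
    qed
    finally show "(\<Sum>i<k. D (C i ** Y ** cadj (C i))) \<le> D Y + e" .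
  qed
qed

lemma dirB: assumes "L_norm D" shows "M_norm N"
  unfolding M_norm_def
proof (intro allI impI)
  fix k :: nat and X :: "nat \<Rightarrow> 'n cmat" and C :: "nat \<Rightarrow> 'n cmat"
  assume hC: "(\<Sum>i<k. cadj (C i) ** C i) = mat 1"
  have k: "k > 0" by (rule k_pos[OF hC])
  define m where "m = (MAX i\<in>{..<k}. N (X i))"
  have "N (X 0) \<le> m" unfolding m_def using k by (rule max_ge)
  then have m0: "m \<ge> 0" using N_nonneg[of "X 0"] by linarith
  show "N (\<Sum>i<k. cadj (C i) ** X i ** C i) \<le> m"
  proof (rule bidual)
    fix Y assume Y: "D Y \<le> 1"
    have "cmod (ip Y (\<Sum>i<k. cadj (C i) ** X i ** C i)) = cmod (\<Sum>i<k. ip (C i ** Y ** cadj (C i)) (X i))"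
      by (simp add: sum_cyc1)
    also have "\<dots> \<le> (\<Sum>i<k. cmod (ip (C i ** Y ** cadj (C i)) (X i)))" by (rule norm_sum)
    also have "\<dots> \<le> (\<Sum>i<k. D (C i ** Y ** cadj (C i)) * m)"
    proof (intro sum_mono)
      fix i assume "i \<in> {..<k}"
      then have "N (X i) \<le> m" unfolding m_def by (intro max_ge) auto
      then show "cmod (ip (C i ** Y ** cadj (C i)) (X i)) \<le> D (C i ** Y ** cadj (C i)) * m"
        using F1[of "C i ** Y ** cadj (C i)" "X i"] D_nonneg[of "C i ** Y ** cadj (C i)"]
        by (meson mult_left_mono order.trans)
    qed
    also have "\<dots> = (\<Sum>i<k. D (C i ** Y ** cadj (C i))) * m" by (simp add: sum_distrib_right)
    also have "\<dots> \<le> D Y * m"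
      using assms hC m0 unfolding L_norm_def by (simp add: mult_right_mono)
    also have "\<dots> \<le> m" using Y m0 mult_right_mono[of "D Y" 1 m] by simp
    finally show "cmod (ip Y (\<Sum>i<k. cadj (C i) ** X i ** C i)) \<le> m" .
  qed
qed

lemma dirC: assumes "L_norm N" shows "M_norm D"
  unfolding M_norm_def
proof (intro allI impI)
  fix k :: nat and Y :: "nat \<Rightarrow> 'n cmat" and C :: "nat \<Rightarrow> 'n cmat"
  assume hC: "(\<Sum>i<k. cadj (C i) ** C i) = mat 1"
  have k: "k > 0" by (rule k_pos[OF hC])
  define m where "m = (MAX i\<in>{..<k}. D (Y i))"
  have "D (Y 0) \<le> m" unfolding m_def using k by (rule max_ge)
  then have m0: "m \<ge> 0" using D_nonneg[of "Y 0"] by linarith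
  show "D (\<Sum>i<k. cadj (C i) ** Y i ** C i) \<le> m"
  proof (rule D_least)
    fix X assume X: "N X \<le> 1"
    have "cmod (ip (\<Sum>i<k. cadj (C i) ** Y i ** C i) X) = cmod (\<Sum>i<k. ip (Y i) (C i ** X ** cadj (C i)))"
      by (simp add: sum_cyc2)
    also have "\<dots> \<le> (\<Sum>i<k. cmod (ip (Y i) (C i ** X ** cadj (C i))))" by (rule norm_sum)
    also have "\<dots> \<le> (\<Sum>i<k. m * N (C i ** X ** cadj (C i)))"
    proof (intro sum_mono)
      fix i assume "i \<in> {..<k}"
      then have "D (Y i) \<le> m" unfolding m_def by (intro max_ge) auto
      then show "cmod (ip (Y i) (C i ** X ** cadj (C i))) \<le> m * N (C i ** X ** cadj (C i))"
        using F1[of "Y i" "C i ** X ** cadj (C i)"] N_nonneg[of "C i ** X ** cadj (C i)"]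
        by (meson mult_right_mono order.trans)
    qed
    also have "\<dots> = m * (\<Sum>i<k. N (C i ** X ** cadj (C i)))" by (simp add: sum_distrib_left)
    also have "\<dots> \<le> m * N X"
      using assms hC m0 unfolding L_norm_def by (simp add: mult_left_mono)
    also have "\<dots> \<le> m" using X m0 by (simp add: mult_left_le)
    finally show "cmod (ip (\<Sum>i<k. cadj (C i) ** Y i ** C i) X) \<le> m" .
  qed
qed

lemma dirD: assumes "M_norm D" shows "L_norm N"
  unfolding L_norm_def
proof (intro allI impI)
  fix k :: nat and X :: "'n cmat" and C :: "nat \<Rightarrow> 'n cmat"
  assume hC: "(\<Sum>i<k. cadj (C i) ** C i) = mat 1"
  have k: "k > 0" by (rule k_pos[OF hC])
  show "(\<Sum>i<k. N (C i ** X ** cadj (C i))) \<le> N X"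
  proof (rule eps_le)
    fix e :: real assume e: "e > 0"
    have "\<forall>i. \<exists>Y. D Y \<le> 1 \<and> Re (ip Y (C i ** X ** cadj (C i))) > N (C i ** X ** cadj (C i)) - e / k"
      using near_N e k by simp
    then obtain Y where Y: "\<And>i. D (Y i) \<le> 1"
      "\<And>i. Re (ip (Y i) (C i ** X ** cadj (C i))) > N (C i ** X ** cadj (C i)) - e / k"
      by metis
    have "(\<Sum>i<k. N (C i ** X ** cadj (C i))) \<le> (\<Sum>i<k. Re (ip (Y i) (C i ** X ** cadj (C i))) + e / k)"
    proof (rule sum_mono)
      fix i show "N (C i ** X ** cadj (C i)) \<le> Re (ip (Y i) (C i ** X ** cadj (C i))) + e / k"
        using Y(2)[of i] by linarith
    qed
    also have "\<dots> = Re (ip (\<Sum>i<k. cadj (C i) ** Y i ** C i) X) + e"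
      using k by (simp add: sum.distrib sum_cyc2[symmetric] Re_sum)
    also have "\<dots> \<le> D (\<Sum>i<k. cadj (C i) ** Y i ** C i) * N X + e"
      using F1[of "\<Sum>i<k. cadj (C i) ** Y i ** C i" X] complex_Re_le_cmod[of "ip (\<Sum>i<k. cadj (C i) ** Y i ** C i) X"] by linarith
    also have "\<dots> \<le> N X + e"
    proof -
      have "D (\<Sum>i<k. cadj (C i) ** Y i ** C i) \<le> (MAX i\<in>{..<k}. D (Y i))"
        using assms hC unfolding M_norm_def by blast
      also have "\<dots> \<le> 1" using k Y(1) by (intro max_le) auto
      finally show ?thesis using N_nonneg[of X] mult_right_le_one_le[of "N X"] D_nonneg
        by (simp add: mult.commute mult_left_le)
    qed
    finally show "(\<Sum>i<k. N (C i ** X ** cadj (C i))) \<le> N X + e" .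
  qed
qed

end

theorem lemma2p6:
  fixes N :: "'n::finite cmat \<Rightarrow> real"
  assumes "is_mat_norm N"
  shows "(M_norm N \<longleftrightarrow> L_norm (dual_norm N)) \<and> (L_norm N \<longleftrightarrow> M_norm (dual_norm N))"
proof -
  interpret mnorm N by standard (rule assms)
  show ?thesis using dirA dirB dirC dirD unfolding D_def by blast
qed

end
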